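(* Let $\mathcal G=G(n;S)$ be an integral circulant graph with $n$ odd, and let $A$ be its adjacency matrix. Then there do not exist $0\leq a<b\leq n-1$ and real $t>0$ such that $\left|\left(e^{\iota A t}\right)_{a,b}\right|=1$, where $\iota=\sqrt{-1}$. In other words, an integral circulant graph with an odd number of vertices does not admit perfect state transfer.
   Context: For a set $S\subseteq\{1,\dots,n-1\}$ with $s\in S$ iff $n-s\in S$, the circulant graph $G(n;S)$ is the undirected graph on vertex set $\mathbb{Z}_n=\{0,\dots,n-1\}$ in which $i$ and $j$ are adjacent iff $i-j \bmod n\in S$. A graph is integral if all eigenvalues of its adjacency matrix are integers. Perfect state transfer between vertices $a$ and $b$ means there is $0<t<\infty$ with $|\langle a|e^{\iota A t}|b\rangle|=1$, where $\langle a|M|b\rangle$ denotes the $(a,b)$ entry of the matrix $M$. *)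

theory Defs
  imports Complex_Main "Jordan_Normal_Form.Char_Poly"
begin

text \<open>Adjacency matrix of the circulant graph G(n;S) on vertex set Z_n = {0..n-1}:
  i and j are adjacent iff (i - j) mod n is in S.\<close>
definition circulant_adj :: "nat \<Rightarrow> nat set \<Rightarrow> complex mat" where
  "circulant_adj n S = mat n n (\<lambda>(i,j). if (i + n - j) mod n \<in> S then 1 else 0)"

definition circulant_set :: "nat \<Rightarrow> nat set \<Rightarrow> bool" where
  "circulant_set n S \<longleftrightarrow> S \<subseteq> {1..n-1} \<and> (\<forall>s \<in> {1..n-1}. s \<in> S \<longleftrightarrow> n - s \<in> S)"

definition integral_mat :: "complex mat \<Rightarrow> bool" where
  "integral_mat A \<longleftrightarrow> (\<forall>e. eigenvalue A e \<longrightarrow> e \<in> \<int>)"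

definition mat_exp :: "complex mat \<Rightarrow> complex mat" where
  "mat_exp A = mat (dim_row A) (dim_col A) (\<lambda>(i,j). \<Sum>k. (A ^\<^sub>m k) $$ (i,j) / of_nat (fact k))"

end

theory Submission
  imports Defs
begin

definition ee :: "nat \<Rightarrow> int \<Rightarrow> complex" where
  "ee n x = cis (2 * pi * of_int x / of_nat n)"

lemma ee_add: "ee n (x + y) = ee n x * ee n y"
  unfolding ee_def cis_mult by (simp add: add_divide_distrib distrib_left)

lemma ee_zero[simp]: "ee n 0 = 1"
  unfolding ee_def by simp

lemma ee_mult_n: assumes "n > 0" shows "ee n (int n * k) = 1"
proof -
  have "2 * pi * of_int (int n * k) / of_nat n = 2 * pi * of_int k"
    using assms by simp
  then show ?thesis unfolding ee_def by simp
qed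

lemma ee_period: assumes "n > 0" "x mod int n = y mod int n" shows "ee n x = ee n y"
proof -
  obtain k where "x = y + int n * k"
    using assms(2) by (metis mod_eqE mult.commute add.commute eq_iff_diff_eq_0 diff_add_cancel dvd_def)
  then show ?thesis using ee_add ee_mult_n[OF assms(1)] by simp
qed

lemma cnj_ee: "cnj (ee n x) = ee n (- x)"
  unfolding ee_def cis_cnj by simp

lemma ee_pow: "ee n x ^ j = ee n (int j * x)"
  unfolding ee_def DeMoivre by (simp add: mult_ac)

lemma ee_one: assumes "n > 0" "ee n x = 1" shows "int n dvd x"
proof -
  have "cos (2 * pi * of_int x / of_nat n) = 1"
    using assms(2) unfolding ee_def by (metis cis.sel(1) one_complex.sel(1))
  then obtain m :: int where m: "2 * pi * of_int x / of_nat n = real_of_int m * 2 * pi"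
    using cos_one_2pi_int by metis
  then have "real_of_int x = real_of_int m * real n" using assms(1) pi_gt_zero
    by (simp add: field_simps)
  then have "x = m * int n" by (metis of_int_eq_iff of_int_mult of_int_of_nat_eq)
  then show ?thesis by simp
qed

lemma ee_geom: assumes "n > 0"
  shows "(\<Sum>j<n. ee n (int j * x)) = (if int n dvd x then of_nat n else 0)"
proof (cases "int n dvd x")
  case True
  then obtain k where "x = int n * k" by blast
  then have "\<And>j. ee n (int j * x) = 1" using ee_mult_n[OF assms, of "int j * k" for j]
    by (simp add: mult_ac)
  then show ?thesis using True by simp
next
  case False
  define w where "w = ee n x"
  have w1: "w \<noteq> 1" using ee_one[OF assms, of x] False unfolding w_def by blast
  have wn: "w ^ n = 1" unfolding w_def ee_pow using ee_mult_n[OF assms] by simp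
  have "(\<Sum>j<n. ee n (int j * x)) = (\<Sum>j<n. w ^ j)" unfolding w_def ee_pow by simp
  also have "\<dots> = 0" using w1 wn by (simp add: geometric_sum)
  finally show ?thesis using False by simp
qed

lemma ee_period2: assumes "n > 0" "int n dvd (x - y)" shows "ee n x = ee n y"
proof -
  obtain k where "x - y = int n * k" using assms(2) by blast
  then have "x = y + int n * k" by simp
  then show ?thesis using ee_add ee_mult_n[OF assms(1)] by simp
qed

lemma ee_split: "ee n (int j * (int a - int c)) = ee n (int j * int a) * ee n (- (int j * int c))"
  by (simp add: right_diff_distrib ee_add[symmetric])

lemma smult_pow_mat: fixes A :: "complex mat" assumes "A \<in> carrier_mat n n"
  shows "(c \<cdot>\<^sub>m A) ^\<^sub>m k = c ^ k \<cdot>\<^sub>m (A ^\<^sub>m k)"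
proof (induction k)
  case 0
  then show ?case using assms by (intro eq_matI) auto
next
  case (Suc k)
  have "(c \<cdot>\<^sub>m A) ^\<^sub>m Suc k = (c ^ k \<cdot>\<^sub>m (A ^\<^sub>m k)) * (c \<cdot>\<^sub>m A)"
    using Suc by simp
  also have "\<dots> = c ^ k \<cdot>\<^sub>m ((A ^\<^sub>m k) * (c \<cdot>\<^sub>m A))"
    by (rule mult_smult_assoc_mat[of _ n n _ n]) (use assms in auto)
  also have "\<dots> = c ^ k \<cdot>\<^sub>m (c \<cdot>\<^sub>m ((A ^\<^sub>m k) * A))"
    using assms by (subst mult_smult_distrib[of _ n n _ n]) auto
  also have "\<dots> = c ^ Suc k \<cdot>\<^sub>m (A ^\<^sub>m Suc k)"
    by (intro eq_matI) (auto simp: mult_ac)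
  finally show ?case .
qed

definition lam :: "nat \<Rightarrow> nat set \<Rightarrow> nat \<Rightarrow> complex" where
  "lam n S j = (\<Sum>d<n. (if d \<in> S then 1 else 0) * ee n (- (int j * int d)))"

lemma circ_carrier: "circulant_adj n S \<in> carrier_mat n n"
  unfolding circulant_adj_def by auto

lemma circ_index: "i < n \<Longrightarrow> j < n \<Longrightarrow> circulant_adj n S $$ (i,j) = (if (i + n - j) mod n \<in> S then 1 else 0)"
  unfolding circulant_adj_def by auto

lemma inner_sum: assumes n: "n > 0" and b: "b < n"
  shows "(\<Sum>c<n. ee n (- (int j * int c)) * (if (c + n - b) mod n \<in> S then 1 else 0))
       = ee n (- (int j * int b)) * lam n S j"
proof -
  have "(\<Sum>c<n. ee n (- (int j * int c)) * (if (c + n - b) mod n \<in> S then 1 else 0))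
      = (\<Sum>d<n. ee n (- (int j * int ((d + b) mod n))) * (if ((d + b) mod n + n - b) mod n \<in> S then 1 else 0))"
  proof (rule sum.reindex_bij_witness[of _ "\<lambda>d. (d + b) mod n" "\<lambda>c. (c + n - b) mod n"])
    fix c assume "c \<in> {..<n}"
    then have c: "c < n" by simp
    have "((c + n - b) mod n + b) mod n = (c + n - b + b) mod n" by (simp add: mod_add_left_eq)
    also have "\<dots> = c" using b c by simp
    finally have cc: "((c + n - b) mod n + b) mod n = c" .
    then show "((c + n - b) mod n + b) mod n = c" .
    show "ee n (- (int j * int (((c + n - b) mod n + b) mod n))) * (if (((c + n - b) mod n + b) mod n + n - b) mod n \<in> S then 1 else 0)
        = ee n (- (int j * int c)) * (if (c + n - b) mod n \<in> S then 1 else 0)" unfolding cc ..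
    show "(c + n - b) mod n \<in> {..<n}" using n by simp
  next
    fix d assume "d \<in> {..<n}"
    then have d: "d < n" by simp
    have e: "(d + b) mod n + n - b = (d + b) mod n + (n - b)" using b by simp
    have "((d + b) mod n + n - b) mod n = (d + b + (n - b)) mod n" unfolding e by (simp add: mod_add_left_eq)
    also have "\<dots> = d" using b d by simp
    finally show "((d + b) mod n + n - b) mod n = d" .
    show "(d + b) mod n \<in> {..<n}" using n by simp
  qed
  also have "\<dots> = (\<Sum>d<n. ee n (- (int j * int b)) * ((if d \<in> S then 1 else 0) * ee n (- (int j * int d))))"
  proof (rule sum.cong[OF refl])
    fix d assume "d \<in> {..<n}"
    then have d: "d < n" by simp
    have e: "(d + b) mod n + n - b = (d + b) mod n + (n - b)" using b by simp
    have "((d + b) mod n + n - b) mod n = (d + b + (n - b)) mod n" unfolding e by (simp add: mod_add_left_eq)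
    also have "\<dots> = d" using b d by simp
    finally have m: "((d + b) mod n + n - b) mod n = d" .
    have h: "int ((d + b) mod n) = int d + int b - int n * int ((d + b) div n)"
      by (metis add_diff_cancel_left' div_mult_mod_eq mult.commute of_nat_add of_nat_mult)
    have "- (int j * int ((d + b) mod n)) - (- (int j * int b) + - (int j * int d)) = int n * (int j * int ((d + b) div n))"
      by (subst h) (simp add: algebra_simps)
    then have "ee n (- (int j * int ((d + b) mod n))) = ee n (- (int j * int b) + - (int j * int d))"
      using n by (intro ee_period2) auto
    then show "ee n (- (int j * int ((d + b) mod n))) * (if ((d + b) mod n + n - b) mod n \<in> S then 1 else 0)
        = ee n (- (int j * int b)) * ((if d \<in> S then 1 else 0) * ee n (- (int j * int d)))"
      unfolding m by (simp add: ee_add[symmetric])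
  qed
  also have "\<dots> = ee n (- (int j * int b)) * lam n S j"
    unfolding lam_def by (simp add: sum_distrib_left)
  finally show ?thesis .
qed

lemma pow_entry: assumes n: "n > 0" and a: "a < n" and b: "b < n"
  shows "(circulant_adj n S ^\<^sub>m k) $$ (a, b)
     = 1 / of_nat n * (\<Sum>j<n. lam n S j ^ k * ee n (int j * (int a - int b)))"
  using a b
proof (induction k arbitrary: a b)
  case 0
  have dv: "int n dvd (int a - int b) \<longleftrightarrow> a = b"
  proof
    assume "int n dvd (int a - int b)"
    then have "int a mod int n = int b mod int n" by (simp add: mod_eq_dvd_iff)
    then show "a = b" using 0 by simp
  qed simp
  have "(\<Sum>j<n. ee n (int j * (int a - int b))) = (if a = b then of_nat n else 0)"
    using ee_geom[OF n, of "int a - int b"] dv by simp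
  then show ?case using 0 n circ_carrier[of n S] by simp
next
  case (Suc k)
  let ?A = "circulant_adj n S"
  let ?L = "lam n S"
  let ?X = "\<lambda>c. (if (c + n - b) mod n \<in> S then 1 else 0) :: complex"
  have "(?A ^\<^sub>m Suc k) $$ (a, b) = (\<Sum>c<n. (?A ^\<^sub>m k) $$ (a, c) * ?A $$ (c, b))"
    using Suc.prems circ_carrier[of n S] by (simp add: scalar_prod_def lessThan_atLeast0)
  also have "\<dots> = (\<Sum>c<n. (1 / of_nat n * (\<Sum>j<n. ?L j ^ k * ee n (int j * (int a - int c)))) * ?X c)"
    using Suc by (intro sum.cong) (auto simp: circ_index)
  also have "\<dots> = (\<Sum>c<n. \<Sum>j<n. 1 / of_nat n * ?L j ^ k * ee n (int j * int a) * (ee n (- (int j * int c)) * ?X c))"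
    by (simp add: sum_distrib_left sum_distrib_right ee_split mult_ac)
  also have "\<dots> = (\<Sum>j<n. 1 / of_nat n * ?L j ^ k * ee n (int j * int a) * (\<Sum>c<n. ee n (- (int j * int c)) * ?X c))"
    by (subst sum.swap) (simp add: sum_distrib_left)
  also have "\<dots> = (\<Sum>j<n. 1 / of_nat n * ?L j ^ k * ee n (int j * int a) * (ee n (- (int j * int b)) * ?L j))"
    using inner_sum[OF n Suc.prems(2)] by simp
  also have "\<dots> = 1 / of_nat n * (\<Sum>j<n. ?L j ^ Suc k * ee n (int j * (int a - int b)))"
    by (simp add: sum_distrib_left ee_split mult_ac)
  finally show ?case .
qed

lemma exp_sums_c: "(\<lambda>k. (x::complex) ^ k / of_nat (fact k)) sums exp x"
proof -
  have "(\<lambda>k. x ^ k /\<^sub>R fact k) = (\<lambda>k. x ^ k / of_nat (fact k))"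
    by (rule ext) (simp add: scaleR_conv_of_real divide_inverse mult.commute)
  then show ?thesis using exp_converges[of x] by simp
qed

lemma exp_entry: assumes n: "n > 0" and a: "a < n" and b: "b < n"
  shows "mat_exp (c \<cdot>\<^sub>m circulant_adj n S) $$ (a, b)
     = 1 / of_nat n * (\<Sum>j<n. exp (c * lam n S j) * ee n (int j * (int a - int b)))"
proof -
  let ?A = "circulant_adj n S"
  have dims: "dim_row (c \<cdot>\<^sub>m ?A) = n" "dim_col (c \<cdot>\<^sub>m ?A) = n"
    using circ_carrier[of n S] by auto
  have tm: "((c \<cdot>\<^sub>m ?A) ^\<^sub>m k) $$ (a, b) / of_nat (fact k)
      = (\<Sum>j<n. 1 / of_nat n * ee n (int j * (int a - int b)) * ((c * lam n S j) ^ k / of_nat (fact k)))" for k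
  proof -
    have "((c \<cdot>\<^sub>m ?A) ^\<^sub>m k) $$ (a, b) = c ^ k * (?A ^\<^sub>m k) $$ (a, b)"
      unfolding smult_pow_mat[OF circ_carrier] using a b circ_carrier[of n S] by simp
    then show ?thesis unfolding pow_entry[OF n a b]
      by (simp add: sum_distrib_left sum_divide_distrib power_mult_distrib mult_ac)
  qed
  have "(\<lambda>k. ((c \<cdot>\<^sub>m ?A) ^\<^sub>m k) $$ (a, b) / of_nat (fact k)) sums
     (\<Sum>j<n. 1 / of_nat n * ee n (int j * (int a - int b)) * exp (c * lam n S j))"
    unfolding tm by (intro sums_sum sums_mult exp_sums_c)
  then have "mat_exp (c \<cdot>\<^sub>m ?A) $$ (a, b) = (\<Sum>j<n. 1 / of_nat n * ee n (int j * (int a - int b)) * exp (c * lam n S j))"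
    unfolding mat_exp_def dims using a b by (simp add: sums_unique[symmetric])
  then show ?thesis by (simp add: sum_distrib_left mult_ac)
qed

lemma neg_mod_inv: fixes j n :: nat assumes "j < n" shows "(n - (n - j) mod n) mod n = j"
proof (cases "j = 0")
  case True then show ?thesis by simp
next
  case False
  then have "(n - j) mod n = n - j" using assms by simp
  then show ?thesis using assms by simp
qed

lemma sum_neg_reindex: fixes n :: nat and f :: "nat \<Rightarrow> 'a::comm_monoid_add" assumes "n > 0"
  shows "(\<Sum>j<n. f j) = (\<Sum>j<n. f ((n - j) mod n))"
proof (rule sum.reindex_bij_witness[of _ "\<lambda>j. (n - j) mod n" "\<lambda>j. (n - j) mod n"])
  fix a assume "a \<in> {..<n}"
  then have a: "a < n" by simp
  show "(n - (n - a) mod n) mod n = a" using neg_mod_inv[OF a] .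
  then show "f ((n - (n - a) mod n) mod n) = f a" by simp
  show "(n - a) mod n \<in> {..<n}" using assms by simp
next
  fix a assume "a \<in> {..<n}"
  then have a: "a < n" by simp
  show "(n - (n - a) mod n) mod n = a" using neg_mod_inv[OF a] .
  show "(n - a) mod n \<in> {..<n}" using assms by simp
qed

lemma int_neg_mod: assumes "j < n" shows "int ((n - j) mod n) = int n - int j - int n * int ((n - j) div n)"
proof -
  have "int ((n - j) mod n) = int (n - j) - int n * int ((n - j) div n)"
    by (metis add_diff_cancel_left' div_mult_mod_eq mult.commute of_nat_add of_nat_mult)
  then show ?thesis using assms by simp
qed

lemma lam_sym: assumes n: "n > 0" and cs: "circulant_set n S"
  shows "lam n S j = (\<Sum>d<n. (if d \<in> S then 1 else 0) * ee n (int j * int d))"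
proof -
  have "lam n S j = (\<Sum>d<n. (if (n - d) mod n \<in> S then 1 else 0) * ee n (- (int j * int ((n - d) mod n))))"
    unfolding lam_def by (rule sum_neg_reindex[OF n])
  also have "\<dots> = (\<Sum>d<n. (if d \<in> S then 1 else 0) * ee n (int j * int d))"
  proof (rule sum.cong[OF refl])
    fix d assume "d \<in> {..<n}"
    then have d: "d < n" by simp
    have m: "((n - d) mod n \<in> S) = (d \<in> S)"
    proof (cases "d = 0")
      case True
      then show ?thesis using cs unfolding circulant_set_def by auto
    next
      case False
      then have "(n - d) mod n = n - d" using d by simp
      moreover have "d \<in> {1..n-1}" using False d by auto
      ultimately show ?thesis using cs unfolding circulant_set_def by auto
    qed
    have "- (int j * int ((n - d) mod n)) - int j * int d = int n * (int j * (int ((n - d) div n) - 1))"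
      by (subst int_neg_mod[OF d]) (simp add: algebra_simps)
    then have "ee n (- (int j * int ((n - d) mod n))) = ee n (int j * int d)"
      using n by (intro ee_period2) auto
    then show "(if (n - d) mod n \<in> S then 1 else 0) * ee n (- (int j * int ((n - d) mod n)))
        = (if d \<in> S then 1 else 0) * ee n (int j * int d)" using m by simp
  qed
  finally show ?thesis .
qed

lemma lam_real: assumes n: "n > 0" and cs: "circulant_set n S"
  shows "cnj (lam n S j) = lam n S j"
proof -
  have "cnj (lam n S j) = (\<Sum>d<n. (if d \<in> S then 1 else 0) * ee n (int j * int d))"
    unfolding lam_def cnj_sum by (intro sum.cong) (auto simp: cnj_ee)
  then show ?thesis using lam_sym[OF n cs] by simp
qed

lemma lam_neg: assumes n: "n > 0" and cs: "circulant_set n S" and j: "j < n"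
  shows "lam n S ((n - j) mod n) = lam n S j"
proof -
  have "lam n S ((n - j) mod n) = (\<Sum>d<n. (if d \<in> S then 1 else 0) * ee n (int j * int d))"
    unfolding lam_def
  proof (rule sum.cong[OF refl])
    fix d assume "d \<in> {..<n}"
    have "- (int ((n - j) mod n) * int d) - int j * int d = int n * (int d * (int ((n - j) div n) - 1))"
      by (subst int_neg_mod[OF j]) (simp add: algebra_simps)
    then have "ee n (- (int ((n - j) mod n) * int d)) = ee n (int j * int d)"
      using n by (intro ee_period2) auto
    then show "(if d \<in> S then 1 else 0) * ee n (- (int ((n - j) mod n) * int d)) =
         (if d \<in> S then 1 else 0) * ee n (int j * int d)" by simp
  qed
  then show ?thesis using lam_sym[OF n cs] by simp
qed

definition gg :: "nat \<Rightarrow> (nat \<Rightarrow> complex) \<Rightarrow> int \<Rightarrow> complex" where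
  "gg n z x = 1 / of_nat n * (\<Sum>j<n. z j * ee n (int j * x))"

lemma dvd_diff_lt: assumes "j < n" "l < n" shows "int n dvd (int j - int l) \<longleftrightarrow> j = l"
proof
  assume "int n dvd (int j - int l)"
  then have "int j mod int n = int l mod int n" by (simp add: mod_eq_dvd_iff)
  then show "j = l" using assms by simp
qed simp

lemma parseval: assumes n: "n > 0" and z: "\<And>j. j < n \<Longrightarrow> cmod (z j) = 1"
  shows "(\<Sum>x<n. cmod (gg n z (int x)) ^ 2) = 1"
proof -
  have zz: "z j * cnj (z j) = 1" if "j < n" for j
    using z[OF that] complex_norm_square[of "z j"] by simp
  have prod: "gg n z (int x) * cnj (gg n z (int x)) =
     (\<Sum>j<n. \<Sum>l<n. 1 / (of_nat n)^2 * (z j * cnj (z l)) * ee n (int x * (int j - int l)))" for x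
  proof -
    have e: "ee n (int j * int x) * ee n (- (int l * int x)) = ee n (int x * (int j - int l))" for j l
      by (simp add: ee_add[symmetric] algebra_simps)
    have "gg n z (int x) * cnj (gg n z (int x)) = 1 / of_nat n * (\<Sum>j<n. z j * ee n (int j * int x)) *
        (1 / of_nat n * (\<Sum>l<n. cnj (z l) * ee n (- (int l * int x))))"
      unfolding gg_def by (simp add: cnj_sum cnj_ee)
    also have "\<dots> = (\<Sum>j<n. \<Sum>l<n. 1 / (of_nat n)^2 * (z j * cnj (z l)) * (ee n (int j * int x) * ee n (- (int l * int x))))"
      by (simp add: sum_distrib_left sum_distrib_right power2_eq_square mult_ac) (rule sum.swap)
    finally show ?thesis unfolding e .
  qed
  have "complex_of_real (\<Sum>x<n. cmod (gg n z (int x)) ^ 2) = (\<Sum>x<n. gg n z (int x) * cnj (gg n z (int x)))"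
    by (simp only: of_real_sum complex_norm_square)
  also have "\<dots> = (\<Sum>j<n. \<Sum>l<n. 1 / (of_nat n)^2 * (z j * cnj (z l)) * (\<Sum>x<n. ee n (int x * (int j - int l))))"
    unfolding prod sum_distrib_left
  proof -
    have sw: "(\<Sum>x<n. \<Sum>j<n. \<Sum>l<n. F x j l) = (\<Sum>j<n. \<Sum>l<n. \<Sum>x<n. F x j l)" for F :: "nat \<Rightarrow> nat \<Rightarrow> nat \<Rightarrow> complex"
    proof -
      have "(\<Sum>x<n. \<Sum>j<n. \<Sum>l<n. F x j l) = (\<Sum>j<n. \<Sum>x<n. \<Sum>l<n. F x j l)" by (rule sum.swap)
      also have "\<dots> = (\<Sum>j<n. \<Sum>l<n. \<Sum>x<n. F x j l)" by (intro sum.cong refl sum.swap)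
      finally show ?thesis .
    qed
    show "(\<Sum>x<n. \<Sum>j<n. \<Sum>l<n. 1 / (of_nat n)^2 * (z j * cnj (z l)) * ee n (int x * (int j - int l))) = (\<Sum>j<n. \<Sum>l<n. \<Sum>x<n. 1 / (of_nat n)^2 * (z j * cnj (z l)) * ee n (int x * (int j - int l)))" by (rule sw)
  qed
  also have "\<dots> = (\<Sum>j<n. \<Sum>l<n. if l = j then 1 / (of_nat n)^2 * (z j * cnj (z j)) * of_nat n else 0)"
    by (intro sum.cong refl) (auto simp: ee_geom[OF n] dvd_diff_lt)
  also have "\<dots> = (\<Sum>j<n. 1 / (of_nat n)^2 * of_nat n)"
    by (intro sum.cong refl) (simp add: zz)
  also have "\<dots> = 1" using n by (simp add: power2_eq_square)
  finally show ?thesis by (metis of_real_eq_1_iff)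
qed

lemma gg_period: assumes n: "n > 0" and d: "int n dvd (x - y)" shows "gg n z x = gg n z y"
proof -
  have "ee n (int j * x) = ee n (int j * y)" for j
  proof -
    from d obtain k where "x - y = int n * k" by blast
    then have "int j * x - int j * y = int n * (int j * k)" by (simp add: algebra_simps)
    then show ?thesis using n by (intro ee_period2) auto
  qed
  then show ?thesis unfolding gg_def by simp
qed

lemma gg_neg: assumes n: "n > 0" and zs: "\<And>j. j < n \<Longrightarrow> z ((n - j) mod n) = z j"
  shows "gg n z (- x) = gg n z x"
proof -
  have "(\<Sum>j<n. z j * ee n (int j * (- x))) = (\<Sum>j<n. z ((n - j) mod n) * ee n (int ((n - j) mod n) * (- x)))"
    by (rule sum_neg_reindex[OF n])
  also have "\<dots> = (\<Sum>j<n. z j * ee n (int j * x))"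
  proof (rule sum.cong[OF refl])
    fix j assume "j \<in> {..<n}"
    then have j: "j < n" by simp
    have "int ((n - j) mod n) * (- x) - int j * x = int n * (int ((n - j) div n) * x - x)"
      by (subst int_neg_mod[OF j]) (simp add: algebra_simps)
    then have "ee n (int ((n - j) mod n) * (- x)) = ee n (int j * x)"
      using n by (intro ee_period2) auto
    then show "z ((n - j) mod n) * ee n (int ((n - j) mod n) * (- x)) = z j * ee n (int j * x)"
      using zs[OF j] by simp
  qed
  finally show ?thesis unfolding gg_def by simp
qed

theorem proposition1:
  fixes n :: nat and S :: "nat set"
  assumes "odd n"
    and "circulant_set n S"
    and "integral_mat (circulant_adj n S)"
  shows "\<not> (\<exists>a b (t::real). a < b \<and> b \<le> n - 1 \<and> t > 0 \<and>
            cmod (mat_exp ((\<i> * complex_of_real t) \<cdot>\<^sub>m circulant_adj n S) $$ (a, b)) = 1)"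
proof
  assume "\<exists>a b (t::real). a < b \<and> b \<le> n - 1 \<and> t > 0 \<and>
            cmod (mat_exp ((\<i> * complex_of_real t) \<cdot>\<^sub>m circulant_adj n S) $$ (a, b)) = 1"
  then obtain a b and t :: real where ab: "a < b" "b \<le> n - 1" and
    U: "cmod (mat_exp ((\<i> * complex_of_real t) \<cdot>\<^sub>m circulant_adj n S) $$ (a, b)) = 1"
    by blast
  have n: "n > 0" using ab by simp
  have a: "a < n" and b: "b < n" using ab by auto
  define z where "z j = exp ((\<i> * complex_of_real t) * lam n S j)" for j
  have zn: "cmod (z j) = 1" for j
  proof -
    have "cnj (lam n S j) = lam n S j" by (rule lam_real[OF n assms(2)])
    then have "Im (cnj (lam n S j)) = Im (lam n S j)" by simp
    then have "Im (lam n S j) = 0" by simp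
    then show ?thesis unfolding z_def by simp
  qed
  have zs: "z ((n - j) mod n) = z j" if "j < n" for j
    unfolding z_def using lam_neg[OF n assms(2) that] by simp
  have Ug: "mat_exp ((\<i> * complex_of_real t) \<cdot>\<^sub>m circulant_adj n S) $$ (a, b) = gg n z (int a - int b)"
    unfolding exp_entry[OF n a b] gg_def z_def ..
  define d1 where "d1 = a + n - b"
  define d2 where "d2 = b - a"
  have d1n: "d1 < n" and d2n: "d2 < n" using ab a b unfolding d1_def d2_def by auto
  have d12: "d1 \<noteq> d2"
  proof
    assume "d1 = d2"
    then have "n = 2 * d2" using ab b unfolding d1_def d2_def by auto
    then show False using assms(1) by simp
  qed
  have g1: "gg n z (int d1) = gg n z (int a - int b)"
    using n ab b unfolding d1_def by (intro gg_period) auto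
  have g2: "gg n z (int d2) = gg n z (int a - int b)"
  proof -
    have "gg n z (int d2) = gg n z (- (int a - int b))" using ab unfolding d2_def by simp
    also have "\<dots> = gg n z (int a - int b)" by (rule gg_neg[of n z, OF n zs])
    finally show ?thesis .
  qed
  have "(\<Sum>x\<in>{d1, d2}. cmod (gg n z (int x)) ^ 2) \<le> (\<Sum>x<n. cmod (gg n z (int x)) ^ 2)"
    using d1n d2n by (intro sum_mono2) auto
  also have "\<dots> = 1" by (rule parseval[OF n zn])
  finally have "(\<Sum>x\<in>{d1, d2}. cmod (gg n z (int x)) ^ 2) \<le> 1" .
  moreover have "(\<Sum>x\<in>{d1, d2}. cmod (gg n z (int x)) ^ 2) = 2"
    using d12 g1 g2 U Ug by simp
  ultimately show False by simp
qed

end
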